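(* Let $G$ be a well-bicovered graph and let $e$ be an edge of $G$ incident with a vertex $y$ of degree $2$. Then the graph $G'$ obtained from $G$ by replacing the edge $e$ by a path of length three (i.e., subdividing $e$ with two new vertices) is well-bicovered.
   Context: All graphs are finite and simple; "subgraph" means induced subgraph. A graph is well-bicovered if every vertex-inclusion-maximal induced bipartite subgraph has the same order. *)

theory Defs
  imports Main
begin

definition simple_graph :: "'a set \<Rightarrow> 'a set set \<Rightarrow> bool" where
  "simple_graph V E \<longleftrightarrow> finite V \<and> (\<forall>e\<in>E. e \<subseteq> V \<and> card e = 2)"

definition degree :: "'a set set \<Rightarrow> 'a \<Rightarrow> nat" where
  "degree E v = card {e\<in>E. v \<in> e}"

definition induces_bipartite :: "'a set set \<Rightarrow> 'a set \<Rightarrow> bool" where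
  "induces_bipartite E S \<longleftrightarrow>
     (\<exists>A B. A \<union> B = S \<and> A \<inter> B = {} \<and>
        (\<forall>e\<in>E. e \<subseteq> S \<longrightarrow> \<not> e \<subseteq> A \<and> \<not> e \<subseteq> B))"

definition maximal_bipartite :: "'a set \<Rightarrow> 'a set set \<Rightarrow> 'a set \<Rightarrow> bool" where
  "maximal_bipartite V E S \<longleftrightarrow> S \<subseteq> V \<and> induces_bipartite E S \<and>
     (\<forall>T. S \<subset> T \<and> T \<subseteq> V \<longrightarrow> \<not> induces_bipartite E T)"

definition well_bicovered :: "'a set \<Rightarrow> 'a set set \<Rightarrow> bool" where
  "well_bicovered V E \<longleftrightarrow>
     (\<forall>S T. maximal_bipartite V E S \<and> maximal_bipartite V E T \<longrightarrow> card S = card T)"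

end

theory Submission
  imports Defs
begin

definition bipf :: "'a set set \<Rightarrow> 'a set \<Rightarrow> ('a \<Rightarrow> bool) \<Rightarrow> bool" where
  "bipf E S f \<longleftrightarrow> (\<forall>e\<in>E. e \<subseteq> S \<longrightarrow> (\<exists>u\<in>e. f u) \<and> (\<exists>u\<in>e. \<not> f u))"

lemma ib_iff: "induces_bipartite E S \<longleftrightarrow> (\<exists>f. bipf E S f)"
proof
  assume "induces_bipartite E S"
  then obtain A B where AB: "A \<union> B = S" "A \<inter> B = {}"
    "\<forall>e\<in>E. e \<subseteq> S \<longrightarrow> \<not> e \<subseteq> A \<and> \<not> e \<subseteq> B"
    unfolding induces_bipartite_def by blast
  have "bipf E S (\<lambda>v. v \<in> A)" unfolding bipf_def
  proof (intro ballI impI)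
    fix e assume "e \<in> E" "e \<subseteq> S"
    with AB(3) have "\<not> e \<subseteq> A" "\<not> e \<subseteq> B" by auto
    with AB(1) \<open>e \<subseteq> S\<close> show "(\<exists>u\<in>e. u \<in> A) \<and> (\<exists>u\<in>e. u \<notin> A)" by blast
  qed
  then show "\<exists>f. bipf E S f" by blast
next
  assume "\<exists>f. bipf E S f"
  then obtain f where f: "bipf E S f" by blast
  show "induces_bipartite E S" unfolding induces_bipartite_def
    apply (rule exI[of _ "{v\<in>S. f v}"], rule exI[of _ "{v\<in>S. \<not> f v}"])
    using f unfolding bipf_def by blast
qed

lemma bip_mono: "bipf E S f \<Longrightarrow> T \<subseteq> S \<Longrightarrow> bipf E T f"
  unfolding bipf_def by (meson subset_trans)

lemma pendant:
  assumes "bipf E S f" "v \<noteq> w" "\<forall>e\<in>E. v \<in> e \<longrightarrow> e \<subseteq> insert v S \<longrightarrow> e = {v, w}"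
  shows "bipf E (insert v S) (f(v := \<not> f w))"
  unfolding bipf_def
proof (intro ballI impI)
  fix e assume e: "e \<in> E" "e \<subseteq> insert v S"
  show "(\<exists>u\<in>e. (f(v := \<not> f w)) u) \<and> (\<exists>u\<in>e. \<not> (f(v := \<not> f w)) u)"
  proof (cases "v \<in> e")
    case True
    have "v \<in> e \<longrightarrow> e \<subseteq> insert v S \<longrightarrow> e = {v, w}" using assms(3) e(1) by (rule bspec)
    then have ev: "e = {v, w}" using True e(2) by simp
    have "(f(v := \<not> f w)) v \<noteq> (f(v := \<not> f w)) w" using assms(2) by simp
    then show ?thesis unfolding ev by (cases "(f(v := \<not> f w)) v") auto
  next
    case False
    then have "e \<subseteq> S" using e by blast
    then have "(\<exists>u\<in>e. f u) \<and> (\<exists>u\<in>e. \<not> f u)" using assms(1) e unfolding bipf_def by blast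
    moreover have "\<forall>u\<in>e. (f(v := \<not> f w)) u = f u" using False by auto
    ultimately show ?thesis by auto
  qed
qed

lemma pendant_ex:
  assumes "\<exists>f. bipf E S f" "v \<noteq> w" "\<forall>e\<in>E. v \<in> e \<longrightarrow> e \<subseteq> insert v S \<longrightarrow> e = {v, w}"
  shows "\<exists>f. bipf E (insert v S) f"
  using pendant[OF _ assms(2,3)] assms(1) by blast

lemma pendant2:
  assumes "\<exists>f. bipf E S f" "v \<noteq> w" "\<forall>e\<in>E. v \<in> e \<longrightarrow> e = {v, w} \<or> e = {v, u}" "u \<notin> insert v S"
  shows "\<exists>f. bipf E (insert v S) f"
proof -
  have "\<forall>e\<in>E. v \<in> e \<longrightarrow> e \<subseteq> insert v S \<longrightarrow> e = {v, w}"
  proof (intro ballI impI)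
    fix e assume "e \<in> E" "v \<in> e" "e \<subseteq> insert v S"
    then have "e = {v, w} \<or> e = {v, u}" using assms(3) by simp
    moreover have "e \<noteq> {v, u}" using \<open>e \<subseteq> insert v S\<close> assms(4) by auto
    ultimately show "e = {v, w}" by simp
  qed
  then show ?thesis using pendant_ex[OF assms(1,2)] by blast
qed

lemma max_not: "maximal_bipartite V E S \<Longrightarrow> v \<in> V \<Longrightarrow> v \<notin> S \<Longrightarrow> \<not> (\<exists>f. bipf E (insert v S) f)"
  unfolding maximal_bipartite_def ib_iff by blast

lemma max_intro:
  assumes "S \<subseteq> V" "\<exists>f. bipf E S f" "\<And>v. v \<in> V \<Longrightarrow> v \<notin> S \<Longrightarrow> \<not> (\<exists>f. bipf E (insert v S) f)"
  shows "maximal_bipartite V E S"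
  unfolding maximal_bipartite_def ib_iff
proof (intro conjI allI impI assms(1,2))
  fix T assume T: "S \<subset> T \<and> T \<subseteq> V"
  then obtain v where v: "v \<in> T" "v \<notin> S" by blast
  show "\<not> (\<exists>f. bipf E T f)"
  proof
    assume "\<exists>f. bipf E T f"
    moreover have "insert v S \<subseteq> T" using T v by blast
    ultimately have "\<exists>f. bipf E (insert v S) f" using bip_mono by blast
    then show False using assms(3)[of v] v T by blast
  qed
qed

lemma bipfD: "bipf E S f \<Longrightarrow> e \<in> E \<Longrightarrow> e \<subseteq> S \<Longrightarrow> (\<exists>u\<in>e. f u) \<and> (\<exists>u\<in>e. \<not> f u)"
  unfolding bipf_def by simp

lemma bipf_edge: "bipf E S f \<Longrightarrow> {u, v} \<in> E \<Longrightarrow> u \<in> S \<Longrightarrow> v \<in> S \<Longrightarrow> f u \<noteq> f v"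
  using bipfD[of E S f "{u, v}"] by auto

lemma two: "f u \<noteq> f v \<Longrightarrow> (\<exists>w\<in>{u, v}. f w) \<and> (\<exists>w\<in>{u, v}. \<not> f w)"
  by (cases "f u") auto

lemma card_swap: "finite S \<Longrightarrow> y \<in> S \<Longrightarrow> b \<notin> S \<Longrightarrow> card (insert b (S - {y})) = card S"
proof -
  assume a: "finite S" "y \<in> S" "b \<notin> S"
  then have "card (insert b (S - {y})) = Suc (card (S - {y}))" by simp
  also have "\<dots> = card S" using card_Suc_Diff1[OF a(1,2)] .
  finally show ?thesis .
qed

lemma pend2:
  assumes "\<forall>e\<in>E. v \<in> e \<longrightarrow> e = {v, w} \<or> e = {v, u}" "u \<notin> insert v S"
  shows "\<forall>e\<in>E. v \<in> e \<longrightarrow> e \<subseteq> insert v S \<longrightarrow> e = {v, w}"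
proof (intro ballI impI)
  fix e assume "e \<in> E" "v \<in> e" "e \<subseteq> insert v S"
  then have "e = {v, w} \<or> e = {v, u}" using assms(1) by simp
  moreover have "e \<noteq> {v, u}" using \<open>e \<subseteq> insert v S\<close> assms(2) by auto
  ultimately show "e = {v, w}" by simp
qed

locale subdiv =
  fixes V :: "'a set" and E :: "'a set set" and y z a b x :: 'a
  assumes simple: "simple_graph V E"
    and yz: "{y, z} \<in> E"
    and aV: "a \<notin> V" and bV: "b \<notin> V" and ab: "a \<noteq> b"
    and xV: "x \<in> V" and yx: "y \<noteq> x"
    and ynb: "\<forall>e\<in>E. y \<in> e \<longrightarrow> e = {y, z} \<or> e = {y, x}"
begin

abbreviation "E' \<equiv> (E - {{y, z}}) \<union> {{y, a}, {a, b}, {b, z}}"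
abbreviation "V' \<equiv> V \<union> {a, b}"

lemma eV: "e \<in> E \<Longrightarrow> e \<subseteq> V"
  using simple unfolding simple_graph_def by blast

lemma finV: "finite V" using simple unfolding simple_graph_def by blast

lemma yV: "y \<in> V" and zV: "z \<in> V" using eV[OF yz] by auto

lemma ynz: "y \<noteq> z"
  using simple yz unfolding simple_graph_def by fastforce

lemma aE: "e \<in> E \<Longrightarrow> a \<notin> e" and bE: "e \<in> E \<Longrightarrow> b \<notin> e"
  using eV aV bV by blast+

lemma neqs: "a \<noteq> y" "a \<noteq> z" "b \<noteq> y" "b \<noteq> z" "a \<noteq> x" "b \<noteq> x"
  using aV bV yV zV xV by auto

lemma case1_down:
  assumes f: "bipf E' S f" and "a \<in> S" "b \<in> S"
  shows "bipf E (S - {a, b}) f"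
  unfolding bipf_def
proof (intro ballI impI)
  fix e assume e: "e \<in> E" "e \<subseteq> S - {a, b}"
  show "(\<exists>u\<in>e. f u) \<and> (\<exists>u\<in>e. \<not> f u)"
  proof (cases "e = {y, z}")
    case True
    then have "y \<in> S" "z \<in> S" using e by auto
    then have "f y \<noteq> f a" "f a \<noteq> f b" "f b \<noteq> f z"
      using bipf_edge[OF f] assms(2,3) by simp_all
    then have "f y \<noteq> f z" by simp
    then show ?thesis using True by auto
  next
    case False
    then have "e \<in> E'" using e by simp
    moreover have "e \<subseteq> S" using e by auto
    ultimately show ?thesis using bipfD[OF f] by simp
  qed
qed

lemma E'_cases: "e \<in> E' \<Longrightarrow> (e \<in> E \<and> e \<noteq> {y, z}) \<or> e = {y, a} \<or> e = {a, b} \<or> e = {b, z}"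
  by auto

lemma nbA0: "e \<in> E' \<Longrightarrow> a \<in> e \<Longrightarrow> e = {a, y} \<or> e = {a, b}"
proof -
  assume e: "e \<in> E'" "a \<in> e"
  have "a \<notin> {b, z}" using ab neqs by simp
  then show ?thesis using E'_cases[OF e(1)] aE e(2) insert_commute[of y a "{}"] by metis
qed

lemma nbB0: "e \<in> E' \<Longrightarrow> b \<in> e \<Longrightarrow> e = {b, z} \<or> e = {b, a}"
proof -
  assume e: "e \<in> E'" "b \<in> e"
  have "b \<notin> {y, a}" using ab neqs by simp
  then show ?thesis using E'_cases[OF e(1)] bE e(2) insert_commute[of a b "{}"] by metis
qed

lemma nbY0: "e \<in> E' \<Longrightarrow> y \<in> e \<Longrightarrow> e = {y, x} \<or> e = {y, a}"
proof -
  assume e: "e \<in> E'" "y \<in> e"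
  have "y \<notin> {a, b}" "y \<notin> {b, z}" using ab neqs ynz by simp_all
  then show ?thesis using E'_cases[OF e(1)] ynb e(2) by metis
qed

lemma nbA: "\<forall>e\<in>E'. a \<in> e \<longrightarrow> e = {a, y} \<or> e = {a, b}"
  and nbA': "\<forall>e\<in>E'. a \<in> e \<longrightarrow> e = {a, b} \<or> e = {a, y}"
  by (metis nbA0)+

lemma nbB: "\<forall>e\<in>E'. b \<in> e \<longrightarrow> e = {b, z} \<or> e = {b, a}"
  and nbB': "\<forall>e\<in>E'. b \<in> e \<longrightarrow> e = {b, a} \<or> e = {b, z}"
  by (metis nbB0)+

lemma nbY: "\<forall>e\<in>E'. y \<in> e \<longrightarrow> e = {y, x} \<or> e = {y, a}"
  by (metis nbY0)

lemma case1_up: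
  assumes g: "bipf E U g" and UV: "U \<subseteq> V"
  shows "\<exists>f. bipf E' (U \<union> {a, b}) f"
proof (cases "y \<in> U \<and> z \<in> U")
  case True
  then have "{y, z} \<subseteq> U" by simp
  then have "(\<exists>u\<in>{y, z}. g u) \<and> (\<exists>u\<in>{y, z}. \<not> g u)" using bipfD[OF g yz] by simp
  then have gyz: "g y \<noteq> g z" by auto
  define h where "h = g(a := \<not> g y, b := g y)"
  have hy: "h y = g y" and ha: "h a = (\<not> g y)" and hb: "h b = g y" and hz: "h z = g z"
    unfolding h_def using neqs ab by simp_all
  have hagree: "\<And>u. u \<noteq> a \<Longrightarrow> u \<noteq> b \<Longrightarrow> h u = g u" unfolding h_def by simp
  have "bipf E' (U \<union> {a, b}) h"
    unfolding bipf_def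
  proof (intro ballI impI)
    fix e assume e: "e \<in> E'" "e \<subseteq> U \<union> {a, b}"
    show "(\<exists>u\<in>e. h u) \<and> (\<exists>u\<in>e. \<not> h u)"
    proof (cases "e \<in> E")
      case True
      have "a \<notin> e" "b \<notin> e" using aE[OF True] bE[OF True] by auto
      then have "e \<subseteq> U" using e(2) by auto
      then have "(\<exists>u\<in>e. g u) \<and> (\<exists>u\<in>e. \<not> g u)" using bipfD[OF g True] by simp
      then obtain u1 u2 where u: "u1 \<in> e" "g u1" "u2 \<in> e" "\<not> g u2" by blast
      have "h u1 = g u1" "h u2 = g u2" using hagree u(1,3) \<open>a \<notin> e\<close> \<open>b \<notin> e\<close> by metis+
      then show ?thesis using u by metis
    next
      case False
      then have "e = {y, a} \<or> e = {a, b} \<or> e = {b, z}" using e(1) by simp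
      moreover have "h y \<noteq> h a" "h a \<noteq> h b" "h b \<noteq> h z" using hy ha hb hz gyz by simp_all
      ultimately show ?thesis using two[of h] by metis
    qed
  qed
  then show ?thesis by blast
next
  case False
  have aU: "a \<notin> U" "b \<notin> U" using UV aV bV by auto
  have gE': "bipf E' U g" unfolding bipf_def
  proof (intro ballI impI)
    fix e assume e: "e \<in> E'" "e \<subseteq> U"
    then have "a \<notin> e" "b \<notin> e" using aU by auto
    then have "e \<in> E" using E'_cases[OF e(1)] by auto
    then show "(\<exists>u\<in>e. g u) \<and> (\<exists>u\<in>e. \<not> g u)" using bipfD[OF g _ e(2)] by simp
  qed
  then have gE'': "\<exists>f. bipf E' U f" by blast
  show ?thesis
  proof (cases "y \<in> U")
    case True
    then have zU: "z \<notin> U" using False by simp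
    have "b \<notin> insert a U" using aU ab by simp
    then have "\<exists>f. bipf E' (insert a U) f"
      using pendant_ex[OF gE'' neqs(1) pend2[OF nbA \<open>b \<notin> insert a U\<close>]] by blast
    moreover have zz: "z \<notin> insert b (insert a U)" using zU neqs by simp
    ultimately have "\<exists>f. bipf E' (insert b (insert a U)) f"
      using pendant_ex[OF _ ab[symmetric] pend2[OF nbB' zz]] by blast
    moreover have "insert b (insert a U) = U \<union> {a, b}" by auto
    ultimately show ?thesis by metis
  next
    case False
    have "a \<notin> insert b U" using aU ab by simp
    then have "\<exists>f. bipf E' (insert b U) f"
      using pendant_ex[OF gE'' neqs(4) pend2[OF nbB \<open>a \<notin> insert b U\<close>]] by blast
    moreover have yy: "y \<notin> insert a (insert b U)" using False neqs by simp
    ultimately have "\<exists>f. bipf E' (insert a (insert b U)) f"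
      using pendant_ex[OF _ ab pend2[OF nbA' yy]] by blast
    then show ?thesis by simp
  qed
qed

lemma case1:
  assumes m: "maximal_bipartite V' E' S" and "a \<in> S" "b \<in> S"
  shows "maximal_bipartite V E (S - {a, b})"
proof (rule max_intro)
  have SV: "S \<subseteq> V'" using m unfolding maximal_bipartite_def by simp
  then show "S - {a, b} \<subseteq> V" by auto
  have "induces_bipartite E' S" using m unfolding maximal_bipartite_def by simp
  then obtain f where "bipf E' S f" unfolding ib_iff by blast
  then show "\<exists>f. bipf E (S - {a, b}) f" using case1_down assms by blast
  fix v assume v: "v \<in> V" "v \<notin> S - {a, b}"
  show "\<not> (\<exists>f. bipf E (insert v (S - {a, b})) f)"
  proof
    assume "\<exists>f. bipf E (insert v (S - {a, b})) f"
    then obtain g where "bipf E (insert v (S - {a, b})) g" by blast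
    moreover have "insert v (S - {a, b}) \<subseteq> V" using v SV by auto
    ultimately have "\<exists>f. bipf E' (insert v (S - {a, b}) \<union> {a, b}) f" using case1_up by simp
    moreover have "insert v (S - {a, b}) \<union> {a, b} = insert v S" using assms by auto
    moreover have "v \<notin> S" using v aV bV by auto
    moreover have "v \<in> V'" using v by simp
    ultimately show False using max_not[OF m] by metis
  qed
qed

lemma swap:
  assumes m: "maximal_bipartite V' E' S"
  shows "\<exists>S'. maximal_bipartite V' E' S' \<and> a \<in> S' \<and> b \<in> S' \<and> card S' = card S"
proof -
  have SV: "S \<subseteq> V'" using m unfolding maximal_bipartite_def by simp
  have "induces_bipartite E' S" using m unfolding maximal_bipartite_def by simp
  then have fS: "\<exists>f. bipf E' S f" unfolding ib_iff .
  have fsub: "\<exists>f. bipf E' T f" if "T \<subseteq> S" for T using fS bip_mono[OF _ that] by blast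
  have aV': "a \<in> V'" and bV': "b \<in> V'" by simp_all
  have finS: "finite S" using SV finV finite_subset by auto
  consider "a \<in> S" "b \<in> S" | "a \<in> S" "b \<notin> S" | "a \<notin> S" "b \<in> S" | "a \<notin> S" "b \<notin> S" by blast
  then show ?thesis
  proof cases
    case 1 then show ?thesis using m by blast
  next
    case 2
    have yS: "y \<in> S"
    proof (rule ccontr)
      assume yS: "y \<notin> S"
      have "\<exists>f. bipf E' (S - {a}) f" using fsub by simp
      then have "\<exists>f. bipf E' (insert b (S - {a})) f"
        apply (rule pendant2[OF _ _ nbB])
        using neqs ab by auto
      then have "\<exists>f. bipf E' (insert a (insert b (S - {a}))) f"
        apply (rule pendant2[OF _ _ nbA'])
        using ab yS neqs by auto
      moreover have "insert a (insert b (S - {a})) = insert b S" using 2 by auto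
      ultimately show False using max_not[OF m bV'] 2 by simp
    qed
    define S' where "S' = insert b (S - {y})"
    have c: "card S' = card S" unfolding S'_def using card_swap[OF finS yS] 2 by simp
    have "\<exists>f. bipf E' (S - {y, a}) f" using fsub by simp
    then have "\<exists>f. bipf E' (insert b (S - {y, a})) f"
      apply (rule pendant2[OF _ _ nbB])
      using neqs ab by auto
    then have "\<exists>f. bipf E' (insert a (insert b (S - {y, a}))) f"
      apply (rule pendant2[OF _ _ nbA'])
      using ab neqs by auto
    moreover have "insert a (insert b (S - {y, a})) = S'" unfolding S'_def using 2 neqs by auto
    ultimately have bS': "\<exists>f. bipf E' S' f" by simp
    have "maximal_bipartite V' E' S'"
    proof (rule max_intro)
      show "S' \<subseteq> V'" using SV unfolding S'_def by auto
      show "\<exists>f. bipf E' S' f" by (rule bS')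
      fix v assume v: "v \<in> V'" "v \<notin> S'"
      show "\<not> (\<exists>f. bipf E' (insert v S') f)"
      proof (cases "v = y")
        case True
        then have "insert v S' = insert b S" unfolding S'_def using yS by auto
        then show ?thesis using max_not[OF m bV'] 2 by simp
      next
        case False
        show ?thesis
        proof
          assume "\<exists>f. bipf E' (insert v S') f"
          moreover have sub: "insert v S - {y, a} \<subseteq> insert v S'" unfolding S'_def by auto
          ultimately have "\<exists>f. bipf E' (insert v S - {y, a}) f" using bip_mono[OF _ sub] by blast
          then have "\<exists>f. bipf E' (insert y (insert v S - {y, a})) f"
            apply (rule pendant2[OF _ _ nbY])
            using yx neqs by auto
          then have "\<exists>f. bipf E' (insert a (insert y (insert v S - {y, a}))) f"
            apply (rule pendant2[OF _ _ nbA])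
            using neqs ab v 2 neqs unfolding S'_def by auto
          moreover have "insert a (insert y (insert v S - {y, a})) = insert v S" using 2 yS by auto
          ultimately have "\<exists>f. bipf E' (insert v S) f" by metis
          moreover have "v \<notin> S" using v False unfolding S'_def by auto
          ultimately show False using max_not[OF m v(1)] by blast
        qed
      qed
    qed
    moreover have "a \<in> S'" "b \<in> S'" unfolding S'_def using 2 neqs by auto
    ultimately show ?thesis using c by blast
  next
    case 3
    have yS: "y \<in> S"
    proof (rule ccontr)
      assume yS: "y \<notin> S"
      have "\<exists>f. bipf E' (insert a S) f"
        apply (rule pendant2[OF _ _ nbA'])
        using fS ab yS neqs by auto
      then show False using max_not[OF m aV'] 3 by simp
    qed
    define S' where "S' = insert a (S - {y})"
    have c: "card S' = card S" unfolding S'_def using card_swap[OF finS yS] 3 by simp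
    have "\<exists>f. bipf E' (S - {y}) f" using fsub by simp
    then have bS': "\<exists>f. bipf E' S' f" unfolding S'_def
      apply (rule pendant2[OF _ _ nbA'])
      using ab neqs by auto
    have "maximal_bipartite V' E' S'"
    proof (rule max_intro)
      show "S' \<subseteq> V'" using SV unfolding S'_def by auto
      show "\<exists>f. bipf E' S' f" by (rule bS')
      fix v assume v: "v \<in> V'" "v \<notin> S'"
      show "\<not> (\<exists>f. bipf E' (insert v S') f)"
      proof (cases "v = y")
        case True
        then have "insert v S' = insert a S" unfolding S'_def using yS by auto
        then show ?thesis using max_not[OF m aV'] 3 by simp
      next
        case False
        show ?thesis
        proof
          assume "\<exists>f. bipf E' (insert v S') f"
          moreover have sub: "insert v S - {y, a} \<subseteq> insert v S'" unfolding S'_def by auto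
          ultimately have "\<exists>f. bipf E' (insert v S - {y, a}) f" using bip_mono[OF _ sub] by blast
          then have "\<exists>f. bipf E' (insert y (insert v S - {y, a})) f"
            apply (rule pendant2[OF _ _ nbY])
            using yx neqs by auto
          moreover have "v \<noteq> a" using v unfolding S'_def by auto
          then have "insert y (insert v S - {y, a}) = insert v S" using 3 yS by auto
          ultimately have "\<exists>f. bipf E' (insert v S) f" by metis
          moreover have "v \<notin> S" using v False unfolding S'_def by auto
          ultimately show False using max_not[OF m v(1)] by blast
        qed
      qed
    qed
    moreover have "a \<in> S'" "b \<in> S'" unfolding S'_def using 3 neqs by auto
    ultimately show ?thesis using c by blast
  next
    case 4
    have "\<exists>f. bipf E' (insert a S) f"
      apply (rule pendant2[OF _ _ nbA])
      using fS neqs 4 ab by auto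
    then show ?thesis using max_not[OF m aV'] 4 by simp
  qed
qed

lemma card_main:
  assumes m: "maximal_bipartite V' E' S"
  shows "\<exists>T. maximal_bipartite V E T \<and> card S = card T + 2"
proof -
  obtain S' where S': "maximal_bipartite V' E' S'" "a \<in> S'" "b \<in> S'" "card S' = card S"
    using swap[OF m] by blast
  have "S' \<subseteq> V'" using S'(1) unfolding maximal_bipartite_def by simp
  then have fin: "finite S'" using finV finite_subset by auto
  have "{a, b} \<subseteq> S'" using S'(2,3) by simp
  then have "card S' = card (S' - {a, b}) + card {a, b}"
    using fin by (metis card_Diff_subset finite_subset le_add_diff_inverse2 card_mono)
  moreover have "card {a, b} = 2" using ab by simp
  ultimately show ?thesis using case1[OF S'(1-3)] S'(4) by auto
qed

end

theorem mainTheorem12: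
  fixes V :: "'a set" and E :: "'a set set" and y z a b :: 'a
  assumes "simple_graph V E"
    and "well_bicovered V E"
    and "{y, z} \<in> E"
    and "degree E y = 2"
    and "a \<notin> V" and "b \<notin> V" and "a \<noteq> b"
  shows "well_bicovered (V \<union> {a, b})
           ((E - {{y, z}}) \<union> {{y, a}, {a, b}, {b, z}})"
proof -
  have finE: "finite E" using assms(1) unfolding simple_graph_def
    by (meson Pow_iff finite_Pow_iff finite_subset subsetI)
  let ?N = "{e\<in>E. y \<in> e}"
  have "card ?N = 2" using assms(4) unfolding degree_def .
  then obtain e1 e2 where N: "?N = {e1, e2}" "e1 \<noteq> e2" by (meson card_2_iff)
  have "{y, z} \<in> ?N" using assms(3) by simp
  then obtain e0 where e0: "e0 \<in> ?N" "\<forall>e\<in>?N. e = {y, z} \<or> e = e0"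
    using N by auto
  have "card e0 = 2" "e0 \<subseteq> V" using e0(1) assms(1) unfolding simple_graph_def by auto
  then obtain x where x: "e0 = {y, x}" "y \<noteq> x"
    using e0(1) by (auto simp: card_2_iff) 
  have xV: "x \<in> V" using \<open>e0 \<subseteq> V\<close> x by auto
  interpret s: subdiv V E y z a b x
    apply unfold_locales
    using assms xV x e0 by auto
  show ?thesis unfolding well_bicovered_def
  proof (intro allI impI)
    fix S T assume "maximal_bipartite (V \<union> {a, b}) ((E - {{y, z}}) \<union> {{y, a}, {a, b}, {b, z}}) S \<and>
      maximal_bipartite (V \<union> {a, b}) ((E - {{y, z}}) \<union> {{y, a}, {a, b}, {b, z}}) T"
    then obtain S0 T0 where "maximal_bipartite V E S0" "card S = card S0 + 2"
      "maximal_bipartite V E T0" "card T = card T0 + 2" using s.card_main by metis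
    then show "card S = card T" using assms(2) unfolding well_bicovered_def by metis
  qed
qed

end
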